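(* Consider the discrete-time linear system $x_{k+1} = Ax_k + Bu_k + w_k$, $k\in\mathbb{N}$, with $x_k\in\mathbb{R}^n$, $u_k\in\mathbb{R}^m$, $x_0 = 0$, $(A,B)$ controllable, and i.i.d. process noise $w_k\sim N(0,W)$ with $W\succ 0$. Let $K_0, K_1\in\mathbb{R}^{m\times n}$ be arbitrary gains with $\rho(A+BK_0)<1$ (no assumption on $K_1$), and let $M>0$ and $t\in\mathbb{N}^*$. Let the input be generated by the following switched controller: a counter $\xi_k$ starts at $\xi_0=0$; at step $k$, if $\xi_k>0$ then $u_k = K_0x_k$ and $\xi_{k+1}=\xi_k-1$; if $\xi_k=0$ and $\|x_k\|\ge M$ then $u_k=K_0x_k$ and $\xi_{k+1}=t-1$; if $\xi_k=0$ and $\|x_k\|<M$ then $u_k=K_1x_k$ and $\xi_{k+1}=0$. Let $P_0\succ 0$ and $0<\rho_0<1$ satisfy $(A+BK_0)^TP_0(A+BK_0)\prec \rho_0 P_0$, and let $V_{0,k} = x_k^TP_0x_k$. Then for every $k\in\mathbb{N}$, $$\mathbb{E} V_{0,k} < \frac{M^2\mathcal{A}^2\|P_0\| + \operatorname{tr}(WP_0)}{1-\rho_0},$$ where $\mathcal{A} = \max\{\|A+BK_0\|, \|A+BK_1\|\}$.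
   Context: $\rho(\cdot)$ is the spectral radius, $\|\cdot\|$ is the Euclidean norm for vectors and the induced 2-norm (largest singular value) for matrices. The switched controller applies the fallback gain $K_0$ for $t$ consecutive steps each time, while the primary gain is active, the state norm reaches the threshold $M$. *)

theory Defs
  imports "HOL-Analysis.Analysis" "HOL-Probability.Probability"
begin

definition posdef :: "real^'n^'n \<Rightarrow> bool" where
  "posdef P \<longleftrightarrow> transpose P = P \<and> (\<forall>x. x \<noteq> 0 \<longrightarrow> x \<bullet> (P *v x) > 0)"

definition mnorm :: "real^'n^'m \<Rightarrow> real" where
  "mnorm A = onorm (\<lambda>x. A *v x)"

definition cmat :: "real^'n^'n \<Rightarrow> complex^'n^'n" where
  "cmat A = (\<chi> i j. complex_of_real (A $ i $ j))"

definition spectral_radius :: "real^'n^'n \<Rightarrow> real" where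
  "spectral_radius A = Max {cmod l | l. \<exists>v::complex^'n. v \<noteq> 0 \<and> cmat A *v v = l *s v}"

definition mpow :: "real^'n^'n \<Rightarrow> nat \<Rightarrow> real^'n^'n" where
  "mpow A i = (((**) A) ^^ i) (mat 1)"

definition controllable :: "real^'n^'n \<Rightarrow> real^'m^'n \<Rightarrow> bool" where
  "controllable A B \<longleftrightarrow>
     span (\<Union>i\<in>{..<CARD('n)}. range (\<lambda>u. (mpow A i ** B) *v u)) = UNIV"

text \<open>Nondegenerate centred multivariate Gaussian N(0,W) (Cramer-Wold definition):
  every nonzero linear functional c.X is normal with mean 0 and variance c^T W c.\<close>
definition gaussian_vec :: "'a measure \<Rightarrow> ('a \<Rightarrow> real^'n) \<Rightarrow> real^'n^'n \<Rightarrow> bool" where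
  "gaussian_vec \<Omega> X W \<longleftrightarrow> X \<in> borel_measurable \<Omega> \<and>
     (\<forall>c. c \<noteq> 0 \<longrightarrow>
        distributed \<Omega> lborel (\<lambda>\<omega>. c \<bullet> X \<omega>) (normal_density 0 (sqrt (c \<bullet> (W *v c)))))"

definition ctrl_input :: "real^'n^'m \<Rightarrow> real^'n^'m \<Rightarrow> real \<Rightarrow> real^'n \<Rightarrow> nat \<Rightarrow> real^'m" where
  "ctrl_input K0 K1 Mth x xi =
     (if xi > 0 then K0 *v x else if norm x \<ge> Mth then K0 *v x else K1 *v x)"

definition counter_next :: "real \<Rightarrow> nat \<Rightarrow> real^'n \<Rightarrow> nat \<Rightarrow> nat" where
  "counter_next Mth t x xi =
     (if xi > 0 then xi - 1 else if norm x \<ge> Mth then t - 1 else 0)"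

primrec traj :: "real^'n^'n \<Rightarrow> real^'m^'n \<Rightarrow> real^'n^'m \<Rightarrow> real^'n^'m \<Rightarrow> real \<Rightarrow> nat
                 \<Rightarrow> (nat \<Rightarrow> real^'n) \<Rightarrow> nat \<Rightarrow> (real^'n) \<times> nat" where
  "traj A B K0 K1 Mth t w 0 = (0, 0)"
| "traj A B K0 K1 Mth t w (Suc k) =
     (let x = fst (traj A B K0 K1 Mth t w k); xi = snd (traj A B K0 K1 Mth t w k) in
      (A *v x + B *v ctrl_input K0 K1 Mth x xi + w k, counter_next Mth t x xi))"

end

theory Submission
  imports Defs
begin


lemma gauss1:
  assumes P: "prob_space \<Omega>" and G: "gaussian_vec \<Omega> X W" and W: "posdef W"
  shows "integrable \<Omega> (\<lambda>\<omega>. c \<bullet> X \<omega>) \<and> integral\<^sup>L \<Omega> (\<lambda>\<omega>. c \<bullet> X \<omega>) = 0 \<and>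
         integrable \<Omega> (\<lambda>\<omega>. (c \<bullet> X \<omega>)^2) \<and> integral\<^sup>L \<Omega> (\<lambda>\<omega>. (c \<bullet> X \<omega>)^2) = c \<bullet> (W *v c)"
proof (cases "c = 0")
  case True
  then show ?thesis by simp
next
  case False
  interpret prob_space \<Omega> by fact
  define s where "s = sqrt (c \<bullet> (W *v c))"
  have pos: "c \<bullet> (W *v c) > 0" using W False unfolding posdef_def by auto
  hence s: "s > 0" unfolding s_def by simp
  have D: "distributed \<Omega> lborel (\<lambda>\<omega>. c \<bullet> X \<omega>) (normal_density 0 s)"
    using G False unfolding gaussian_vec_def s_def by auto
  have i1: "integrable \<Omega> (\<lambda>\<omega>. c \<bullet> X \<omega>)"
    using distributed_integrable[OF D, of "\<lambda>x. x"] integrable_normal_moment_nz_1[OF s, of 0] by simp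
  have e1: "integral\<^sup>L \<Omega> (\<lambda>\<omega>. c \<bullet> X \<omega>) = 0"
    using normal_distributed_expectation[OF s D] .
  have i2: "integrable \<Omega> (\<lambda>\<omega>. (c \<bullet> X \<omega>)^2)"
    using distributed_integrable[OF D, of "\<lambda>x. x^2"] integrable_normal_moment[OF s, of 0 2] s by simp
  have e2: "integral\<^sup>L \<Omega> (\<lambda>\<omega>. (c \<bullet> X \<omega>)^2) = s^2"
    using distributed_integral[OF D, of "\<lambda>x. x^2"] integral_normal_moment_even[OF s, of 0 1] s by simp
  show ?thesis using i1 e1 i2 e2 pos unfolding s_def by simp
qed




lemma gauss_bil:
  assumes P: "prob_space \<Omega>" and G: "gaussian_vec \<Omega> X W" and W: "posdef W"
  shows "integrable \<Omega> (\<lambda>\<omega>. (c \<bullet> X \<omega>) * (d \<bullet> X \<omega>)) \<and>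
         integral\<^sup>L \<Omega> (\<lambda>\<omega>. (c \<bullet> X \<omega>) * (d \<bullet> X \<omega>)) = c \<bullet> (W *v d)"
proof -
  have eq: "(\<lambda>\<omega>. (c \<bullet> X \<omega>) * (d \<bullet> X \<omega>)) = (\<lambda>\<omega>. ((c + d) \<bullet> X \<omega>)^2 / 4 - ((c - d) \<bullet> X \<omega>)^2 / 4)"
    by (intro ext) (simp add: inner_add_left inner_diff_left power2_eq_square field_simps)
  note A = gauss1[OF P G W, of "c + d"] and B = gauss1[OF P G W, of "c - d"]
  have sym: "d \<bullet> (W *v c) = c \<bullet> (W *v d)"
    using W unfolding posdef_def
    by (metis dot_lmul_matrix inner_commute transpose_transpose vector_transpose_matrix)
  have "integral\<^sup>L \<Omega> (\<lambda>\<omega>. ((c + d) \<bullet> X \<omega>)^2 / 4 - ((c - d) \<bullet> X \<omega>)^2 / 4)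
     = (c + d) \<bullet> (W *v (c + d)) / 4 - (c - d) \<bullet> (W *v (c - d)) / 4"
    using A B by (simp add: Bochner_Integration.integral_diff)
  also have "\<dots> = c \<bullet> (W *v d)"
    using sym by (simp add: matrix_vector_right_distrib matrix_vector_mult_diff_distrib inner_add_left inner_add_right inner_diff_left inner_diff_right field_simps)
  finally show ?thesis using A B unfolding eq by auto
qed




lemma quad_expand:
  fixes P :: "real^'n^'n" and x :: "real^'n"
  shows "x \<bullet> (P *v x) = (\<Sum>i\<in>UNIV. (axis i 1 \<bullet> x) * ((P $ i) \<bullet> x))"
proof -
  have a: "\<And>i. (P *v x) $ i = P $ i \<bullet> x" by (simp add: matrix_vector_mult_def inner_vec_def)
  have b: "\<And>i. axis i 1 \<bullet> x = x $ i" by (simp add: inner_axis')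
  show ?thesis unfolding b by (simp add: inner_vec_def[of x "P *v x"] a)
qed

lemma gauss_quad:
  assumes P: "prob_space \<Omega>" and G: "gaussian_vec \<Omega> X W" and W: "posdef W"
    and S: "transpose P = P"
  shows "integrable \<Omega> (\<lambda>\<omega>. (a + X \<omega>) \<bullet> (P *v (a + X \<omega>))) \<and>
         integral\<^sup>L \<Omega> (\<lambda>\<omega>. (a + X \<omega>) \<bullet> (P *v (a + X \<omega>))) = a \<bullet> (P *v a) + trace (W ** P)"
proof -
  have symP: "\<And>u v. u \<bullet> (P *v v) = (P *v u) \<bullet> v"
    using S by (metis dot_lmul_matrix inner_commute vector_transpose_matrix)
  have eq: "(\<lambda>\<omega>. (a + X \<omega>) \<bullet> (P *v (a + X \<omega>))) =
     (\<lambda>\<omega>. a \<bullet> (P *v a) + 2 * ((P *v a) \<bullet> X \<omega>) + (\<Sum>i\<in>UNIV. (axis i 1 \<bullet> X \<omega>) * ((P $ i) \<bullet> X \<omega>)))"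
  proof
    fix \<omega>
    have "(a + X \<omega>) \<bullet> (P *v (a + X \<omega>)) = a \<bullet> (P *v a) + a \<bullet> (P *v X \<omega>) + X \<omega> \<bullet> (P *v a) + X \<omega> \<bullet> (P *v X \<omega>)"
      by (simp add: matrix_vector_right_distrib inner_add_left inner_add_right)
    also have "\<dots> = a \<bullet> (P *v a) + 2 * ((P *v a) \<bullet> X \<omega>) + X \<omega> \<bullet> (P *v X \<omega>)"
      using symP[of a "X \<omega>"] by (simp add: inner_commute)
    finally show "(a + X \<omega>) \<bullet> (P *v (a + X \<omega>)) = a \<bullet> (P *v a) + 2 * ((P *v a) \<bullet> X \<omega>) + (\<Sum>i\<in>UNIV. (axis i 1 \<bullet> X \<omega>) * ((P $ i) \<bullet> X \<omega>))"
      unfolding quad_expand[where P=P and x="X \<omega>", symmetric] .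
  qed
  note L = gauss1[OF P G W, of "P *v a"]
  note Q = gauss_bil[OF P G W]
  have iS: "integrable \<Omega> (\<lambda>\<omega>. \<Sum>i\<in>UNIV. (axis i 1 \<bullet> X \<omega>) * ((P $ i) \<bullet> X \<omega>))"
    using Q by (intro Bochner_Integration.integrable_sum) auto
  have eS: "integral\<^sup>L \<Omega> (\<lambda>\<omega>. \<Sum>i\<in>UNIV. (axis i 1 \<bullet> X \<omega>) * ((P $ i) \<bullet> X \<omega>))
     = (\<Sum>i\<in>UNIV. axis i 1 \<bullet> (W *v (P $ i)))"
    using Q by (subst Bochner_Integration.integral_sum) auto
  also have "\<dots> = trace (W ** P)"
  proof -
    have "\<And>i j. P $ i $ j = P $ j $ i" using S by (metis transpose_def vec_lambda_beta)
    then show ?thesis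
      by (simp add: trace_def matrix_matrix_mult_def matrix_vector_mult_def inner_axis' mult.commute)
  qed
  finally have eS': "integral\<^sup>L \<Omega> (\<lambda>\<omega>. \<Sum>i\<in>UNIV. (axis i 1 \<bullet> X \<omega>) * ((P $ i) \<bullet> X \<omega>)) = trace (W ** P)" .
  interpret prob_space \<Omega> by fact
  show ?thesis unfolding eq using L iS eS'
    by (simp add: Bochner_Integration.integral_add prob_space)
qed




lemma traj_local:
  "(\<And>j. j < k \<Longrightarrow> w j = w' j) \<Longrightarrow> traj A B K0 K1 Mth t w k = traj A B K0 K1 Mth t w' k"
  by (induction k) (auto simp: Let_def)

lemma mv_meas[measurable (raw)]:
  fixes K :: "real^'a^'b"
  assumes "f \<in> borel_measurable N"
  shows "(\<lambda>\<omega>. K *v f \<omega>) \<in> borel_measurable N"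
proof -
  have "(\<lambda>v. K *v v) \<in> borel_measurable borel"
    by (intro borel_measurable_continuous_onI linear_continuous_on matrix_vector_mul_bounded_linear)
  from measurable_compose[OF assms this] show ?thesis .
qed

lemma ctrl_meas:
  fixes x :: "'b \<Rightarrow> real^'n" and K0 K1 :: "real^'n^'m" and A :: "real^'n^'n" and B :: "real^'m^'n"
  assumes [measurable]: "x \<in> borel_measurable N" "xi \<in> measurable N (count_space UNIV)"
  shows "(\<lambda>\<omega>. A *v x \<omega> + B *v ctrl_input K0 K1 Mth (x \<omega>) (xi \<omega>)) \<in> borel_measurable N"
proof -
  have [measurable]: "Measurable.pred N (\<lambda>\<omega>. 0 < xi \<omega>)"
  proof -
    have "xi -` {n. 0<n} \<inter> space N \<in> sets N"
      by (rule measurable_sets[of xi N "count_space UNIV"]) measurable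
    moreover have "xi -` {n. 0<n} \<inter> space N = {\<omega> \<in> space N. 0 < xi \<omega>}" by auto
    ultimately show ?thesis unfolding pred_def by simp
  qed
  have c: "(\<lambda>\<omega>. ctrl_input K0 K1 Mth (x \<omega>) (xi \<omega>)) \<in> borel_measurable N"
    unfolding ctrl_input_def by measurable
  then show ?thesis by measurable
qed

lemma traj_meas:
  fixes f :: "'b \<Rightarrow> nat \<Rightarrow> real^'n"
  assumes "\<And>j. j < k \<Longrightarrow> (\<lambda>\<omega>. f \<omega> j) \<in> borel_measurable N"
  shows "(\<lambda>\<omega>. fst (traj A B Ka Kb Mth t (f \<omega>) k)) \<in> borel_measurable N \<and>
         (\<lambda>\<omega>. snd (traj A B Ka Kb Mth t (f \<omega>) k)) \<in> measurable N (count_space UNIV)"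
  using assms
proof (induction k)
  case 0
  then show ?case by simp
next
  case (Suc k)
  define x where "x = (\<lambda>\<omega>. fst (traj A B Ka Kb Mth t (f \<omega>) k))"
  define xi where "xi = (\<lambda>\<omega>. snd (traj A B Ka Kb Mth t (f \<omega>) k))"
  have [measurable]: "x \<in> borel_measurable N" "xi \<in> measurable N (count_space UNIV)"
    using Suc unfolding x_def xi_def by auto
  have [measurable]: "(\<lambda>\<omega>. f \<omega> k) \<in> borel_measurable N" using Suc by auto
  have [measurable]: "Measurable.pred N (\<lambda>\<omega>. 0 < xi \<omega>)"
  proof -
    have "xi -` {n. 0<n} \<inter> space N \<in> sets N"
      by (rule measurable_sets[of xi N "count_space UNIV"]) measurable
    moreover have "xi -` {n. 0<n} \<inter> space N = {\<omega> \<in> space N. 0 < xi \<omega>}" by auto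
    ultimately show ?thesis unfolding pred_def by simp
  qed
  have c: "(\<lambda>\<omega>. ctrl_input Ka Kb Mth (x \<omega>) (xi \<omega>)) \<in> borel_measurable N"
    unfolding ctrl_input_def by measurable
  have d: "(\<lambda>\<omega>. counter_next Mth t (x \<omega>) (xi \<omega>)) \<in> measurable N (count_space UNIV)"
    unfolding counter_next_def by measurable
  have "(\<lambda>\<omega>. A *v x \<omega> + B *v ctrl_input Ka Kb Mth (x \<omega>) (xi \<omega>) + f \<omega> k) \<in> borel_measurable N"
    using c by measurable
  then show ?case using d by (simp add: Let_def x_def xi_def)
qed




lemma mnorm_le: "norm ((K::real^'a^'b) *v x) \<le> mnorm K * norm x"
  unfolding mnorm_def by (rule onorm) simp

lemma mnorm_nonneg: "0 \<le> mnorm (K::real^'a^'b)"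
  unfolding mnorm_def by (rule onorm_pos_le) simp

lemma posdef_nonneg: "posdef P \<Longrightarrow> 0 \<le> x \<bullet> (P *v x)"
  unfolding posdef_def by (cases "x = 0") (auto intro: less_imp_le)

lemma quad_transp:
  fixes C P :: "real^'n^'n"
  shows "x \<bullet> ((transpose C ** P ** C) *v x) = (C *v x) \<bullet> (P *v (C *v x))"
  by (metis dot_lmul_matrix matrix_vector_mul_assoc vector_transpose_matrix)

lemma scaleR_mv: "((r::real) *\<^sub>R (P::real^'n^'m)) *v x = r *\<^sub>R (P *v x)"
  by (simp add: matrix_vector_mult_def vec_eq_iff sum_distrib_left mult.assoc)

lemma step_bound:
  fixes A :: "real^'n^'n" and B :: "real^'m^'n" and K0 K1 :: "real^'n^'m" and P0 :: "real^'n^'n"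
  assumes P0: "posdef P0" and r0: "0 \<le> rho0"
    and D: "posdef (rho0 *\<^sub>R P0 - transpose (A + B ** K0) ** P0 ** (A + B ** K0))"
  shows "(A *v x + B *v ctrl_input K0 K1 Mth x xi) \<bullet> (P0 *v (A *v x + B *v ctrl_input K0 K1 Mth x xi))
     \<le> rho0 * (x \<bullet> (P0 *v x)) + Mth\<^sup>2 * (max (mnorm (A + B ** K0)) (mnorm (A + B ** K1)))\<^sup>2 * mnorm P0"
proof -
  let ?c = "Mth\<^sup>2 * (max (mnorm (A + B ** K0)) (mnorm (A + B ** K1)))\<^sup>2 * mnorm P0"
  have c0: "0 \<le> ?c" using mnorm_nonneg[of P0] by simp
  have lin: "\<And>K. A *v x + B *v (K *v x) = (A + B ** K) *v x"
    by (simp add: matrix_vector_mult_add_rdistrib matrix_vector_mul_assoc)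
  show ?thesis
  proof (cases "xi > 0 \<or> norm x \<ge> Mth")
    case True
    then have y: "A *v x + B *v ctrl_input K0 K1 Mth x xi = (A + B ** K0) *v x"
      unfolding ctrl_input_def using lin by auto
    have "0 \<le> x \<bullet> ((rho0 *\<^sub>R P0 - transpose (A + B ** K0) ** P0 ** (A + B ** K0)) *v x)"
      by (rule posdef_nonneg[OF D])
    then have "((A + B ** K0) *v x) \<bullet> (P0 *v ((A + B ** K0) *v x)) \<le> rho0 * (x \<bullet> (P0 *v x))"
      by (simp add: matrix_vector_mult_diff_rdistrib quad_transp inner_diff_right scaleR_mv)
    then show ?thesis using y c0 by simp
  next
    case False
    then have y: "A *v x + B *v ctrl_input K0 K1 Mth x xi = (A + B ** K1) *v x"
      and xM: "norm x < Mth"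
      unfolding ctrl_input_def using lin by auto
    let ?y = "(A + B ** K1) *v x"
    let ?m = "max (mnorm (A + B ** K0)) (mnorm (A + B ** K1))"
    have ny: "norm ?y \<le> ?m * Mth"
    proof -
      have "norm ?y \<le> mnorm (A + B ** K1) * norm x" by (rule mnorm_le)
      also have "\<dots> \<le> ?m * Mth"
        using xM mnorm_nonneg[of "A + B ** K1"] by (intro mult_mono) auto
      finally show ?thesis .
    qed
    have "?y \<bullet> (P0 *v ?y) \<le> norm ?y * norm (P0 *v ?y)" by (rule norm_cauchy_schwarz)
    also have "\<dots> \<le> norm ?y * (mnorm P0 * norm ?y)"
      by (intro mult_left_mono mnorm_le) auto
    also have "\<dots> = mnorm P0 * (norm ?y)\<^sup>2" by (simp add: power2_eq_square)
    also have "\<dots> \<le> mnorm P0 * (?m * Mth)\<^sup>2"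
      by (intro mult_left_mono power_mono ny mnorm_nonneg) auto
    also have "\<dots> = ?c" by (simp add: power_mult_distrib)
    finally have "?y \<bullet> (P0 *v ?y) \<le> ?c" .
    moreover have "0 \<le> rho0 * (x \<bullet> (P0 *v x))"
      using r0 posdef_nonneg[OF P0, of x] by simp
    ultimately show ?thesis using y by simp
  qed
qed




lemma main_step:
  fixes \<Omega> :: "'a measure"
    and w :: "nat \<Rightarrow> 'a \<Rightarrow> real^'n"
    and A :: "real^'n^'n" and B :: "real^'m^'n"
    and K0 K1 :: "real^'n^'m"
    and W P0 :: "real^'n^'n" and Mth :: real and t :: nat
  assumes PS: "prob_space \<Omega>"
    and W: "posdef W"
    and I: "prob_space.indep_vars \<Omega> (\<lambda>_. borel) w UNIV"
    and G: "\<And>k. gaussian_vec \<Omega> (w k) W"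
    and P0: "posdef P0"
  defines "y \<equiv> \<lambda>k \<omega>. let z = traj A B K0 K1 Mth t (\<lambda>j. w j \<omega>) k in
                A *v fst z + B *v ctrl_input K0 K1 Mth (fst z) (snd z)"
  shows "(\<integral>\<^sup>+ \<omega>. ennreal (let x = fst (traj A B K0 K1 Mth t (\<lambda>j. w j \<omega>) (Suc k)) in x \<bullet> (P0 *v x)) \<partial>\<Omega>)
       = (\<integral>\<^sup>+ \<omega>. ennreal (y k \<omega> \<bullet> (P0 *v y k \<omega>) + trace (W ** P0)) \<partial>\<Omega>)"
proof -
  interpret prob_space \<Omega> by fact
  have wm[measurable]: "\<And>j. w j \<in> borel_measurable \<Omega>" using G unfolding gaussian_vec_def by auto
  define Gk where "Gk = (\<lambda>f::nat \<Rightarrow> real^'n. let z = traj A B K0 K1 Mth t f k in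
                A *v fst z + B *v ctrl_input K0 K1 Mth (fst z) (snd z))"
  have Gm: "Gk \<in> borel_measurable (PiM {..<k} (\<lambda>_. borel))"
  proof -
    have "\<And>j. j < k \<Longrightarrow> (\<lambda>\<omega>. \<omega> j) \<in> borel_measurable (PiM {..<k} (\<lambda>_. borel :: (real^'n) measure))"
      by (rule measurable_component_singleton) auto
    from traj_meas[where f="\<lambda>\<omega>. \<omega>" and k=k and N="PiM {..<k} (\<lambda>_. borel)" and A=A and B=B
        and Ka=K0 and Kb=K1 and Mth=Mth and t=t, OF this]
    show ?thesis unfolding Gk_def Let_def
      by (intro ctrl_meas) auto
  qed
  have yG: "y k = Gk \<circ> (\<lambda>\<omega>. restrict (\<lambda>j. w j \<omega>) {..<k})"
  proof
    fix \<omega>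
    have "traj A B K0 K1 Mth t (\<lambda>j. w j \<omega>) k = traj A B K0 K1 Mth t (restrict (\<lambda>j. w j \<omega>) {..<k}) k"
      by (rule traj_local) auto
    then show "y k \<omega> = (Gk \<circ> (\<lambda>\<omega>. restrict (\<lambda>j. w j \<omega>) {..<k})) \<omega>"
      unfolding y_def Gk_def by simp
  qed
  have wG: "w k = (\<lambda>f. f k) \<circ> (\<lambda>\<omega>. restrict (\<lambda>j. w j \<omega>) {k})"
    by auto
  have ind: "indep_var borel (y k) borel (w k)"
    unfolding yG wG
    by (rule indep_var_compose[OF indep_var_restrict[OF I] Gm]) (auto intro: measurable_component_singleton)
  have ym[measurable]: "y k \<in> borel_measurable \<Omega>" using ind by (rule indep_var_rv1)
  let ?Dy = "distr \<Omega> borel (y k)" and ?Dw = "distr \<Omega> borel (w k)"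
  have dist: "?Dy \<Otimes>\<^sub>M ?Dw = distr \<Omega> (borel \<Otimes>\<^sub>M borel) (\<lambda>\<omega>. (y k \<omega>, w k \<omega>))"
    using ind unfolding indep_var_distribution_eq by auto
  interpret Dw: prob_space ?Dw by (rule prob_space_distr) simp
  define h where "h = (\<lambda>p::(real^'n) \<times> (real^'n). ennreal ((fst p + snd p) \<bullet> (P0 *v (fst p + snd p))))"
  have hm: "h \<in> borel_measurable (borel \<Otimes>\<^sub>M borel)" unfolding h_def by measurable
  have "(\<integral>\<^sup>+ \<omega>. ennreal (let x = fst (traj A B K0 K1 Mth t (\<lambda>j. w j \<omega>) (Suc k)) in x \<bullet> (P0 *v x)) \<partial>\<Omega>)
      = (\<integral>\<^sup>+ \<omega>. h (y k \<omega>, w k \<omega>) \<partial>\<Omega>)"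
    unfolding h_def y_def by (simp add: Let_def)
  also have "\<dots> = integral\<^sup>N (distr \<Omega> (borel \<Otimes>\<^sub>M borel) (\<lambda>\<omega>. (y k \<omega>, w k \<omega>))) h"
    using hm by (subst nn_integral_distr) auto
  also have "\<dots> = integral\<^sup>N (?Dy \<Otimes>\<^sub>M ?Dw) h" by (simp add: dist)
  also have "\<dots> = (\<integral>\<^sup>+ a. \<integral>\<^sup>+ b. h (a, b) \<partial>?Dw \<partial>?Dy)"
    using hm by (subst Dw.nn_integral_fst) (auto cong: measurable_cong_sets)
  also have "\<dots> = (\<integral>\<^sup>+ a. ennreal (a \<bullet> (P0 *v a) + trace (W ** P0)) \<partial>?Dy)"
  proof (rule nn_integral_cong)
    fix a
    have "(\<integral>\<^sup>+ b. h (a, b) \<partial>?Dw) = (\<integral>\<^sup>+ \<omega>. h (a, w k \<omega>) \<partial>\<Omega>)"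
      using hm by (subst nn_integral_distr) (auto simp: h_def)
    also have "\<dots> = ennreal (integral\<^sup>L \<Omega> (\<lambda>\<omega>. (a + w k \<omega>) \<bullet> (P0 *v (a + w k \<omega>))))"
      unfolding h_def fst_conv snd_conv using gauss_quad[OF PS G[of k] W, of P0 a] P0 posdef_nonneg[OF P0]
      by (intro nn_integral_eq_integral) (auto simp: posdef_def)
    also have "\<dots> = ennreal (a \<bullet> (P0 *v a) + trace (W ** P0))"
      using gauss_quad[OF PS G[of k] W, of P0 a] P0 by (simp add: posdef_def)
    finally show "(\<integral>\<^sup>+ b. h (a, b) \<partial>?Dw) = ennreal (a \<bullet> (P0 *v a) + trace (W ** P0))" .
  qed
  also have "\<dots> = (\<integral>\<^sup>+ \<omega>. ennreal (y k \<omega> \<bullet> (P0 *v y k \<omega>) + trace (W ** P0)) \<partial>\<Omega>)"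
    by (subst nn_integral_distr) auto
  finally show ?thesis .
qed




lemma trace_pos:
  fixes X :: "'a \<Rightarrow> real^'n"
  assumes PS: "prob_space \<Omega>" and G: "gaussian_vec \<Omega> X W" and W: "posdef W" and P: "posdef P"
  shows "trace (W ** P) > 0"
proof (rule ccontr)
  assume "\<not> ?thesis"
  interpret prob_space \<Omega> by fact
  have Xm[measurable]: "X \<in> borel_measurable \<Omega>" using G unfolding gaussian_vec_def by auto
  note Q = gauss_quad[OF PS G W, of P 0]
  have S: "transpose P = P" using P by (simp add: posdef_def)
  have i: "integrable \<Omega> (\<lambda>\<omega>. X \<omega> \<bullet> (P *v X \<omega>))" and e: "integral\<^sup>L \<Omega> (\<lambda>\<omega>. X \<omega> \<bullet> (P *v X \<omega>)) = trace (W ** P)"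
    using Q S by auto
  have "integral\<^sup>L \<Omega> (\<lambda>\<omega>. X \<omega> \<bullet> (P *v X \<omega>)) \<ge> 0"
    using posdef_nonneg[OF P] by (intro integral_nonneg_AE) auto
  with e \<open>\<not> ?thesis\<close> have "integral\<^sup>L \<Omega> (\<lambda>\<omega>. X \<omega> \<bullet> (P *v X \<omega>)) = 0" by simp
  then have "AE \<omega> in \<Omega>. X \<omega> \<bullet> (P *v X \<omega>) = 0"
    using integral_nonneg_eq_0_iff_AE[OF i] posdef_nonneg[OF P] by auto
  then have "AE \<omega> in \<Omega>. X \<omega> = 0"
  proof (rule AE_mp)
    show "AE \<omega> in \<Omega>. X \<omega> \<bullet> (P *v X \<omega>) = 0 \<longrightarrow> X \<omega> = 0"
      using P unfolding posdef_def by (intro AE_I2) force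
  qed
  then have "AE \<omega> in \<Omega>. (1 \<bullet> X \<omega>)\<^sup>2 = (0::real)" by (auto elim!: AE_mp)
  then have "integral\<^sup>L \<Omega> (\<lambda>\<omega>. (1 \<bullet> X \<omega>)\<^sup>2) = integral\<^sup>L \<Omega> (\<lambda>\<omega>. 0::real)"
    by (intro integral_cong_AE) auto
  moreover have "(1::real^'n) \<noteq> 0" by (simp add: vec_eq_iff)
  then have "(1::real^'n) \<bullet> (W *v 1) > 0" using W unfolding posdef_def by auto
  ultimately show False
    using gauss1[OF PS G W, of 1] W unfolding posdef_def by auto
qed




theorem lemma1:
  fixes \<Omega> :: "'a measure"
    and w :: "nat \<Rightarrow> 'a \<Rightarrow> real^'n"
    and A :: "real^'n^'n" and B :: "real^'m^'n"
    and K0 K1 :: "real^'n^'m"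
    and W P0 :: "real^'n^'n"
    and Mth rho0 :: real and t :: nat
  assumes "prob_space \<Omega>"
    and "controllable A B"
    and "posdef W"
    and "prob_space.indep_vars \<Omega> (\<lambda>_. borel) w UNIV"
    and "\<And>k. gaussian_vec \<Omega> (w k) W"
    and "spectral_radius (A + B ** K0) < 1"
    and "Mth > 0" and "t \<ge> 1"
    and "posdef P0" and "0 < rho0" and "rho0 < 1"
    and "posdef (rho0 *\<^sub>R P0 - transpose (A + B ** K0) ** P0 ** (A + B ** K0))"
  shows "(\<integral>\<^sup>+ \<omega>. ennreal (let x = fst (traj A B K0 K1 Mth t (\<lambda>j. w j \<omega>) k) in x \<bullet> (P0 *v x)) \<partial>\<Omega>)
         < ennreal ((Mth\<^sup>2 * (max (mnorm (A + B ** K0)) (mnorm (A + B ** K1)))\<^sup>2 * mnorm P0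
                     + trace (W ** P0)) / (1 - rho0))"
proof -
  note PS = assms(1) and W = assms(3) and I = assms(4) and G = assms(5) and P0 = assms(9)
    and r0 = assms(10) and r1 = assms(11) and D = assms(12)
  interpret prob_space \<Omega> by fact
  have wm[measurable]: "\<And>j. w j \<in> borel_measurable \<Omega>" using G unfolding gaussian_vec_def by auto
  define c where "c = Mth\<^sup>2 * (max (mnorm (A + B ** K0)) (mnorm (A + B ** K1)))\<^sup>2 * mnorm P0"
  define C where "C = c + trace (W ** P0)"
  have c0: "0 \<le> c" unfolding c_def using mnorm_nonneg[of P0] by simp
  have Cpos: "C > 0" unfolding C_def using c0 trace_pos[OF PS G W P0] by simp
  define v where "v = (\<lambda>k \<omega>. let x = fst (traj A B K0 K1 Mth t (\<lambda>j. w j \<omega>) k) in x \<bullet> (P0 *v x))"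
  have vnn: "\<And>k \<omega>. 0 \<le> v k \<omega>" unfolding v_def Let_def using posdef_nonneg[OF P0] by auto
  have vm: "\<And>k. v k \<in> borel_measurable \<Omega>"
  proof -
    fix k
    have [measurable]: "(\<lambda>\<omega>. fst (traj A B K0 K1 Mth t (\<lambda>j. w j \<omega>) k)) \<in> borel_measurable \<Omega>"
      using traj_meas[where f="\<lambda>\<omega> j. w j \<omega>" and N=\<Omega> and k=k and A=A and B=B
        and Ka=K0 and Kb=K1 and Mth=Mth and t=t] by auto
    show "v k \<in> borel_measurable \<Omega>" unfolding v_def Let_def by measurable
  qed
  have bound: "(\<integral>\<^sup>+ \<omega>. ennreal (v k \<omega>) \<partial>\<Omega>) \<le> ennreal (C * (1 - rho0^k) / (1 - rho0))" for k
  proof (induction k)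
    case 0
    then show ?case by (simp add: v_def)
  next
    case (Suc k)
    have "(\<integral>\<^sup>+ \<omega>. ennreal (v (Suc k) \<omega>) \<partial>\<Omega>)
      = (\<integral>\<^sup>+ \<omega>. ennreal ((let z = traj A B K0 K1 Mth t (\<lambda>j. w j \<omega>) k in
                A *v fst z + B *v ctrl_input K0 K1 Mth (fst z) (snd z)) \<bullet> (P0 *v (let z = traj A B K0 K1 Mth t (\<lambda>j. w j \<omega>) k in
                A *v fst z + B *v ctrl_input K0 K1 Mth (fst z) (snd z))) + trace (W ** P0)) \<partial>\<Omega>)"
      unfolding v_def by (rule main_step[OF PS W I G P0])
    also have "\<dots> \<le> (\<integral>\<^sup>+ \<omega>. ennreal rho0 * ennreal (v k \<omega>) + ennreal C \<partial>\<Omega>)"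
    proof (rule nn_integral_mono)
      fix \<omega>
      have "(let z = traj A B K0 K1 Mth t (\<lambda>j. w j \<omega>) k in
                A *v fst z + B *v ctrl_input K0 K1 Mth (fst z) (snd z)) \<bullet> (P0 *v (let z = traj A B K0 K1 Mth t (\<lambda>j. w j \<omega>) k in
                A *v fst z + B *v ctrl_input K0 K1 Mth (fst z) (snd z))) + trace (W ** P0)
            \<le> rho0 * v k \<omega> + C"
        unfolding Let_def v_def C_def c_def using step_bound[OF P0 _ D] r0 by fastforce
      then show "ennreal ((let z = traj A B K0 K1 Mth t (\<lambda>j. w j \<omega>) k in
                A *v fst z + B *v ctrl_input K0 K1 Mth (fst z) (snd z)) \<bullet> (P0 *v (let z = traj A B K0 K1 Mth t (\<lambda>j. w j \<omega>) k in
                A *v fst z + B *v ctrl_input K0 K1 Mth (fst z) (snd z))) + trace (W ** P0))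
            \<le> ennreal rho0 * ennreal (v k \<omega>) + ennreal C"
        using r0 vnn[of k \<omega>] Cpos by (simp add: ennreal_mult[symmetric] ennreal_plus[symmetric] del: ennreal_plus)
    qed
    also have "\<dots> = ennreal rho0 * (\<integral>\<^sup>+ \<omega>. ennreal (v k \<omega>) \<partial>\<Omega>) + ennreal C"
      using vm[of k] by (simp add: nn_integral_add nn_integral_cmult emeasure_space_1)
    also have "\<dots> \<le> ennreal rho0 * ennreal (C * (1 - rho0^k) / (1 - rho0)) + ennreal C"
      using Suc by (intro add_mono mult_left_mono) auto
    also have "\<dots> = ennreal (rho0 * (C * (1 - rho0^k) / (1 - rho0)) + C)"
      using r0 r1 Cpos by (simp add: ennreal_mult[symmetric] ennreal_plus[symmetric] power_le_one del: ennreal_plus)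
    also have "rho0 * (C * (1 - rho0^k) / (1 - rho0)) + C = C * (1 - rho0^Suc k) / (1 - rho0)"
      using r1 by (simp add: field_simps)
    finally show ?case .
  qed
  have "ennreal (C * (1 - rho0^k) / (1 - rho0)) < ennreal (C / (1 - rho0))"
    using Cpos r0 r1 by (intro ennreal_lessI) (auto simp: divide_strict_right_mono)
  with bound[of k] show ?thesis unfolding v_def C_def c_def by simp
qed


end
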